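(* Let $N$ be a unitarily invariant norm on $M_n$ normalized so that $N(E_{11})=1$, and let $D$ be a positive definite diagonal matrix. Then $$I(N,D)=N'(D^{-1})^{-1},$$ where $N'$ is the dual norm of $N$.
   Context: $M_n$ is the set of complex $n\times n$ matrices, $P(n)$ the positive semidefinite ones, $\circ$ the Hadamard product, $E_{11}$ the matrix unit with a $1$ in position $(1,1)$ and zeros elsewhere. $I(N,A)=\min\{N(A\circ B): B\in P(n),\ N(B)=1\}$. The dual norm is $N'(X)=\max\{|\operatorname{tr}(X Y^* )|: N(Y)\le1\}$; equivalently, if $\Phi$ is the symmetric gauge function with $N(X)=\Phi(s_1(X),\dots,s_n(X))$ (singular values), $N'$ corresponds to the dual gauge function $\Phi'$. *)

theory Defs
  imports "HOL-Analysis.Analysis"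
begin

definition adjoint :: "complex^'n^'m \<Rightarrow> complex^'m^'n" where
  "adjoint A = (\<chi> i j. cnj (A $ j $ i))"

definition unitary :: "complex^'n^'n \<Rightarrow> bool" where
  "unitary U \<longleftrightarrow> U ** adjoint U = mat 1 \<and> adjoint U ** U = mat 1"

definition psd :: "complex^'n^'n \<Rightarrow> bool" where
  "psd A \<longleftrightarrow> adjoint A = A \<and>
     (\<forall>x :: complex^'n. 0 \<le> Re (\<Sum>i\<in>UNIV. \<Sum>j\<in>UNIV. cnj (x $ i) * A $ i $ j * x $ j))"

definition hadamard :: "complex^'n^'m \<Rightarrow> complex^'n^'m \<Rightarrow> complex^'n^'m" (infixl "\<circ>\<^sub>H" 70) where
  "A \<circ>\<^sub>H B = (\<chi> i j. A $ i $ j * B $ i $ j)"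

definition matrix_unit :: "'n \<Rightarrow> 'n \<Rightarrow> complex^'n^'n" where
  "matrix_unit k l = (\<chi> i j. if i = k \<and> j = l then 1 else 0)"

definition is_matrix_norm :: "(complex^'n^'n \<Rightarrow> real) \<Rightarrow> bool" where
  "is_matrix_norm N \<longleftrightarrow>
     (\<forall>X. 0 \<le> N X) \<and> (\<forall>X. N X = 0 \<longleftrightarrow> X = 0) \<and>
     (\<forall>(c::complex) X. N (\<chi> i j. c * X $ i $ j) = cmod c * N X) \<and> (\<forall>X Y. N (X + Y) \<le> N X + N Y)"

definition unitarily_invariant_norm :: "(complex^'n^'n \<Rightarrow> real) \<Rightarrow> bool" where
  "unitarily_invariant_norm N \<longleftrightarrow> is_matrix_norm N \<and>
     (\<forall>U V X. unitary U \<longrightarrow> unitary V \<longrightarrow> N (U ** X ** V) = N X)"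

text \<open>I(N,A) = min { N(A \<circ> B) : B psd, N(B) = 1 } (the minimum is attained; we use Inf).\<close>
definition I_index :: "(complex^'n^'n \<Rightarrow> real) \<Rightarrow> complex^'n^'n \<Rightarrow> real" where
  "I_index N A = Inf {N (A \<circ>\<^sub>H B) | B. psd B \<and> N B = 1}"

text \<open>Dual norm N'(X) = max { |tr(X Y^*)| : N(Y) \<le> 1 } (attained; we use Sup).\<close>
definition dual_norm :: "(complex^'n^'n \<Rightarrow> real) \<Rightarrow> complex^'n^'n \<Rightarrow> real" where
  "dual_norm N X = Sup {cmod (trace (X ** adjoint Y)) | Y. N Y \<le> 1}"

definition pos_def_diagonal :: "complex^'n^'n \<Rightarrow> bool" where
  "pos_def_diagonal D \<longleftrightarrow> (\<forall>i j. i \<noteq> j \<longrightarrow> D $ i $ j = 0) \<and>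
     (\<forall>i. D $ i $ i \<in> \<real> \<and> 0 < Re (D $ i $ i))"

end

theory Submission
  imports Defs
begin
definition cs :: "complex \<Rightarrow> complex^'n^'m \<Rightarrow> complex^'n^'m" where
  "cs c X = (\<chi> i j. c * X $ i $ j)"

definition diagm :: "('n \<Rightarrow> complex) \<Rightarrow> complex^'n^'n" where
  "diagm f = (\<chi> i j. if i = j then f i else 0)"

definition outer :: "complex^'n \<Rightarrow> complex^'n^'n" where
  "outer v = (\<chi> i j. v $ i * cnj (v $ j))"

lemma diagm_mult: "diagm f ** diagm g = diagm (\<lambda>i. f i * g i)"
  by (simp add: diagm_def matrix_matrix_mult_def vec_eq_iff if_distrib[where f="\<lambda>x. x * _"] sum.delta cong: if_cong)

lemma adjoint_diagm: "adjoint (diagm f) = diagm (\<lambda>i. cnj (f i))"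
  by (auto simp add: diagm_def adjoint_def vec_eq_iff)

lemma mat1_diagm: "mat 1 = diagm (\<lambda>i. 1)"
  by (simp add: diagm_def mat_def vec_eq_iff)

lemma unitary_diagm: assumes "\<And>i. cmod (f i) = 1" shows "unitary (diagm f)"
proof -
  have "f i * cnj (f i) = 1" "cnj (f i) * f i = 1" for i
    using assms[of i] by (simp_all add: complex_norm_square[symmetric] mult.commute)
  then show ?thesis
    by (simp add: unitary_def adjoint_diagm diagm_mult mat1_diagm)
qed

lemma unitary_mat1: "unitary (mat 1)"
  by (simp add: mat1_diagm unitary_diagm)

lemma diagm_mult_left: "(diagm f ** X) $ i $ j = f i * X $ i $ j"
  by (simp add: diagm_def matrix_matrix_mult_def if_distrib[where f="\<lambda>x. x * _"] sum.delta cong: if_cong)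

lemma diagm_mult_right: "(X ** diagm f) $ i $ j = X $ i $ j * f j"
  by (simp add: diagm_def matrix_matrix_mult_def if_distrib[where f="\<lambda>x. _ * x"] sum.delta' cong: if_cong)

lemma matrix_mat1_right: "X ** mat 1 = (X::complex^'n^'n)" by simp

context
  fixes N :: "complex^'n^'n \<Rightarrow> real"
  assumes UI: "unitarily_invariant_norm N"
begin

lemma N_nonneg: "0 \<le> N X" using UI by (simp add: unitarily_invariant_norm_def is_matrix_norm_def)
lemma N_zero_iff: "N X = 0 \<longleftrightarrow> X = 0" using UI by (simp add: unitarily_invariant_norm_def is_matrix_norm_def)
lemma N_cs: "N (cs c X) = cmod c * N X" using UI by (simp add: unitarily_invariant_norm_def is_matrix_norm_def cs_def)
lemma N_tri: "N (X + Y) \<le> N X + N Y" using UI by (simp add: unitarily_invariant_norm_def is_matrix_norm_def)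
lemma N_unitary: "unitary U \<Longrightarrow> unitary V \<Longrightarrow> N (U ** X ** V) = N X"
  using UI by (simp add: unitarily_invariant_norm_def)

lemma N_neg: "N (- X) = N X"
proof -
  have "- X = cs (-1) X" by (simp add: cs_def vec_eq_iff)
  then show ?thesis by (simp add: N_cs)
qed

lemma N_diff: "N (X - Y) \<le> N X + N Y"
  using N_tri[of X "- Y"] by (simp add: N_neg)

lemma N_unitary_left: "unitary U \<Longrightarrow> N (U ** X) = N X"
  using N_unitary[of U "mat 1" X] unitary_mat1 by simp

lemma N_zero: "N 0 = 0" using N_zero_iff by simp

end

definition sgnm :: "'n \<Rightarrow> complex^'n^'n" where
  "sgnm a = diagm (\<lambda>i. if i = a then -1 else 1)"

definition pinch :: "'n set \<Rightarrow> complex^'n^'n \<Rightarrow> complex^'n^'n" where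
  "pinch A Y = (\<chi> i j. if i = j \<or> (i \<notin> A \<and> j \<notin> A) then Y $ i $ j else 0)"

lemma unitary_sgnm: "unitary (sgnm a)"
  unfolding sgnm_def by (rule unitary_diagm) simp

lemma pinch_insert: "pinch (insert a A) Y = cs (1/2) (pinch A Y + sgnm a ** pinch A Y ** sgnm a)"
  by (auto simp add: vec_eq_iff pinch_def cs_def sgnm_def diagm_mult_left diagm_mult_right)

lemma phase_lemma:
  assumes "z \<noteq> 0" shows "cnj z / complex_of_real (cmod z) * z = complex_of_real (cmod z)"
proof -
  have h: "cnj z * z = (complex_of_real (cmod z))^2" by (metis complex_norm_square mult.commute of_real_power)
  have c: "complex_of_real (cmod z) \<noteq> 0" using assms by simp
  have "cnj z / complex_of_real (cmod z) * z = (cnj z * z) / complex_of_real (cmod z)" by simp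
  also have "\<dots> = complex_of_real (cmod z)" unfolding h using c by (simp add: power2_eq_square)
  finally show ?thesis .
qed

lemma phase_lemma2:
  assumes "z \<noteq> 0" shows "cnj z * z / complex_of_real (cmod z) = complex_of_real (cmod z)"
  using phase_lemma[OF assms] by simp

context
  fixes N :: "complex^'n^'n \<Rightarrow> real"
  assumes UI: "unitarily_invariant_norm N"
begin

lemma N_pinch: "finite A \<Longrightarrow> N (pinch A Y) \<le> N Y"
proof (induction A rule: finite_induct)
  case empty
  have "pinch {} Y = Y" by (simp add: pinch_def vec_eq_iff)
  then show ?case by simp
next
  case (insert a A)
  have "N (pinch (insert a A) Y) = (1/2) * N (pinch A Y + sgnm a ** pinch A Y ** sgnm a)"
    by (simp add: pinch_insert N_cs[OF UI])
  also have "\<dots> \<le> (1/2) * (N (pinch A Y) + N (sgnm a ** pinch A Y ** sgnm a))"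
    using N_tri[OF UI] by simp
  also have "\<dots> = N (pinch A Y)" by (simp add: N_unitary[OF UI] unitary_sgnm)
  finally show ?case using insert by simp
qed

lemma N_diag_abs: "N (diagm (\<lambda>i. complex_of_real (cmod (Y $ i $ i)))) \<le> N Y"
proof -
  define \<phi> where "\<phi> i = (if Y $ i $ i = 0 then 1 else cnj (Y $ i $ i) / complex_of_real (cmod (Y $ i $ i)))" for i
  have u: "unitary (diagm \<phi>)"
    by (rule unitary_diagm) (simp add: \<phi>_def norm_divide)
  have "diagm (\<lambda>i. complex_of_real (cmod (Y $ i $ i))) = diagm \<phi> ** pinch UNIV Y"
  proof -
    have "\<phi> i * Y $ i $ i = complex_of_real (cmod (Y $ i $ i))" for i
      by (auto simp add: \<phi>_def phase_lemma phase_lemma2)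
    then show ?thesis
      by (simp add: vec_eq_iff diagm_mult_left, auto simp: pinch_def diagm_def)
  qed
  then have "N (diagm (\<lambda>i. complex_of_real (cmod (Y $ i $ i)))) = N (pinch UNIV Y)"
    by (simp add: N_unitary_left[OF UI] u)
  also have "\<dots> \<le> N Y" by (rule N_pinch) simp
  finally show ?thesis .
qed

definition rowm :: "'n \<Rightarrow> complex^'n^'n \<Rightarrow> complex^'n^'n" where
  "rowm a X = (\<chi> i j. if i = a then X $ i $ j else 0)"

lemma N_rowm: "N (rowm a X) \<le> N X"
proof -
  have "rowm a X = cs (1/2) (X - sgnm a ** X ** mat 1)"
    by (auto simp add: vec_eq_iff rowm_def cs_def sgnm_def diagm_mult_left)
  then have "N (rowm a X) = (1/2) * N (X - sgnm a ** X ** mat 1)" by (simp add: N_cs[OF UI])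
  also have "\<dots> \<le> (1/2) * (N X + N (sgnm a ** X ** mat 1))" using N_diff[OF UI] by simp
  also have "N (sgnm a ** X ** mat 1) = N X" by (rule N_unitary[OF UI]) (simp_all add: unitary_sgnm unitary_mat1)
  finally show ?thesis by simp
qed

lemma N_diag_entry: "cmod (f a) * N (matrix_unit a a) \<le> N (diagm f)"
proof -
  have "rowm a (diagm f) = cs (f a) (matrix_unit a a)"
    by (auto simp add: vec_eq_iff rowm_def cs_def diagm_def matrix_unit_def)
  then show ?thesis using N_rowm[of a "diagm f"] by (simp add: N_cs[OF UI])
qed

end

lemma sum_prod_expand:
  fixes a b :: "'n::finite \<Rightarrow> complex"
  shows "(\<Sum>l\<in>UNIV. ((if i = l then 1 else 0) - a i * b l) * ((if l = j then 1 else 0) - a l * b j))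
     = (if i = j then 1 else 0) - 2 * a i * b j + a i * b j * (\<Sum>l\<in>UNIV. b l * a l)"
proof -
  have e: "((if i = l then 1 else 0) - a i * b l) * ((if l = j then 1 else 0) - a l * b j)
     = (if i = l then (if l = j then 1 else 0) else 0) - (if i = l then a l * b j else 0)
       - (if l = j then a i * b l else 0) + a i * b j * (b l * a l)" for l
    by (simp add: algebra_simps)
  show ?thesis
    unfolding e by (simp add: sum.distrib sum_subtractf sum_distrib_left[symmetric])
qed

definition qc :: "complex^'n \<Rightarrow> complex" where
  "qc w = (\<Sum>i\<in>UNIV. cnj (w $ i) * w $ i)"

definition hh :: "complex^'n \<Rightarrow> complex^'n^'n" where
  "hh w = (\<chi> i j. (if i = j then 1 else 0) - (2 / qc w * w $ i) * cnj (w $ j))"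

lemma cnj_qc: "cnj (qc w) = qc w"
  by (simp add: qc_def mult.commute)

lemma hh_adj: "adjoint (hh w) = hh w"
  by (auto simp add: adjoint_def hh_def vec_eq_iff cnj_qc)

lemma hh_sq: assumes "qc w \<noteq> 0" shows "hh w ** hh w = mat 1"
proof -
  have "(\<Sum>l\<in>UNIV. cnj (w $ l) * (2 / qc w * w $ l)) = 2 / qc w * (\<Sum>l\<in>UNIV. cnj (w $ l) * w $ l)"
    by (subst sum_distrib_left) (rule sum.cong, simp_all add: ac_simps)
  also have "\<dots> = 2" using assms by (simp flip: qc_def)
  finally have "(\<Sum>l\<in>UNIV. cnj (w $ l) * (2 / qc w * w $ l)) = 2" .
  then have s2: "(\<Sum>l\<in>UNIV. b l * a l) = 2" if "a = (\<lambda>i. 2 / qc w * w $ i)" "b = (\<lambda>l. cnj (w $ l))" for a b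
    using that by simp
  define a where "a = (\<lambda>i. 2 / qc w * w $ i)"
  define b where "b = (\<lambda>l. cnj (w $ l))"
  have hw: "hh w = (\<chi> i j. (if i = j then 1 else 0) - a i * b j)"
    by (simp add: hh_def a_def b_def)
  have "(hh w ** hh w) $ i $ j = mat 1 $ i $ j" for i j
  proof -
    have "(hh w ** hh w) $ i $ j = (\<Sum>l\<in>UNIV. ((if i = l then 1 else 0) - a i * b l) * ((if l = j then 1 else 0) - a l * b j))"
      unfolding hw matrix_matrix_mult_def vec_lambda_beta by (rule refl)
    also have "\<dots> = (if i = j then 1 else 0) - 2 * a i * b j + a i * b j * (\<Sum>l\<in>UNIV. b l * a l)"
      by (rule sum_prod_expand)
    also have "\<dots> = mat 1 $ i $ j" using s2[OF a_def b_def] by (simp add: mat_def)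
    finally show ?thesis .
  qed
  then show ?thesis by (simp add: vec_eq_iff)
qed

lemma hh_unitary: "qc w \<noteq> 0 \<Longrightarrow> unitary (hh w)"
  by (simp add: unitary_def hh_adj hh_sq)

lemma unit_mult: "(\<Sum>l\<in>UNIV. (if l = (k::'n::finite) then f l else 0) * g l) = f k * (g k :: complex)"
  by (simp add: if_distrib[where f="\<lambda>x. x * _"] sum.delta sum.delta' cong: if_cong)

lemma householder_outer:
  fixes u :: "complex^'n" and k :: 'n
  assumes u1: "qc u = 1" and uk: "u $ k = complex_of_real \<rho> * \<alpha>" and a1: "\<alpha> * cnj \<alpha> = 1" and r1: "\<rho> \<noteq> 1"
  defines "w \<equiv> (\<chi> i. u $ i - (if i = k then \<alpha> else 0))"
  shows "hh w ** matrix_unit k k ** hh w = outer u" and "qc w \<noteq> 0"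
proof -
  have cw: "cnj (w $ i) * w $ i = cnj (u $ i) * u $ i - (if i = k then cnj (u $ k) * \<alpha> + cnj \<alpha> * u $ k - cnj \<alpha> * \<alpha> else 0)" for i
    by (simp add: w_def algebra_simps)
  have "qc w = qc u - (cnj (u $ k) * \<alpha> + cnj \<alpha> * u $ k - cnj \<alpha> * \<alpha>)"
    unfolding qc_def cw by (simp add: sum_subtractf)
  also have "\<dots> = complex_of_real (2 - 2 * \<rho>)"
    using u1 a1 by (simp add: uk algebra_simps)
  finally have q: "qc w = complex_of_real (2 - 2 * \<rho>)" .
  show qn: "qc w \<noteq> 0" using q r1 by simp
  have q1: "complex_of_real (1 - \<rho>) \<noteq> 0" using r1 by simp
  have f: "2 / qc w * cnj (w $ k) = - cnj \<alpha>"
  proof -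
    have "cnj (w $ k) = complex_of_real (\<rho> - 1) * cnj \<alpha>" by (simp add: w_def uk algebra_simps)
    then have "2 / qc w * cnj (w $ k) = (2 * complex_of_real (\<rho> - 1)) / (2 * complex_of_real (1 - \<rho>)) * cnj \<alpha>"
      by (simp add: q)
    also have "\<dots> = - cnj \<alpha>" using q1 by (simp add: field_simps)
    finally show ?thesis .
  qed
  have col: "hh w $ i $ k = cnj \<alpha> * u $ i" for i
  proof -
    have "hh w $ i $ k = (if i = k then 1 else 0) - w $ i * (2 / qc w * cnj (w $ k))"
      by (simp add: hh_def algebra_simps)
    also have "\<dots> = cnj \<alpha> * u $ i" unfolding f using a1 by (simp add: w_def algebra_simps)
    finally show ?thesis .
  qed
  have row: "hh w $ k $ j = \<alpha> * cnj (u $ j)" for j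
  proof -
    have "hh w $ k $ j = adjoint (hh w) $ k $ j" by (simp add: hh_adj)
    also have "\<dots> = cnj (hh w $ j $ k)" by (simp add: adjoint_def)
    finally show ?thesis by (simp add: col)
  qed
  have "(hh w ** matrix_unit k k ** hh w) $ i $ j = outer u $ i $ j" for i j
  proof -
    have "(hh w ** matrix_unit k k) $ i $ l = (if l = k then hh w $ i $ k else 0)" for l
      by (simp add: matrix_matrix_mult_def matrix_unit_def if_distrib[where f="\<lambda>x. _ * x"] sum.delta sum.delta' cong: if_cong)
    then have "(hh w ** matrix_unit k k ** hh w) $ i $ j = hh w $ i $ k * hh w $ k $ j"
      by (simp add: matrix_matrix_mult_def unit_mult)
    also have "\<dots> = (\<alpha> * cnj \<alpha>) * (u $ i * cnj (u $ j))" by (simp add: col row algebra_simps)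
    finally show ?thesis using a1 by (simp add: outer_def)
  qed
  then show "hh w ** matrix_unit k k ** hh w = outer u" by (simp add: vec_eq_iff)
qed

lemma cnj_mult_self: "cnj z * z = complex_of_real ((cmod z)^2)"
  by (metis complex_norm_square mult.commute)

lemma qc_real: "qc v = complex_of_real (\<Sum>i\<in>UNIV. (cmod (v $ i))^2)"
  unfolding qc_def of_real_sum cnj_mult_self by (rule refl)

lemma qc_nonneg: "0 \<le> (\<Sum>i\<in>UNIV. (cmod (v $ i))^2)"
  by (simp add: sum_nonneg)

lemma qc_zero: "(\<Sum>i\<in>UNIV. (cmod (v $ i))^2) = 0 \<longleftrightarrow> v = 0"
  by (simp add: sum_nonneg_eq_0_iff vec_eq_iff)

context
  fixes N :: "complex^'n^'n \<Rightarrow> real" and k :: 'n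
  assumes UI: "unitarily_invariant_norm N" and Nk: "N (matrix_unit k k) = 1"
begin

lemma N_outer_unit:
  assumes u1: "qc u = 1" shows "N (outer u) = 1"
proof -
  obtain \<alpha> \<rho> where uk: "u $ k = complex_of_real \<rho> * \<alpha>" and a1: "\<alpha> * cnj \<alpha> = 1" and r1: "\<rho> \<noteq> 1"
  proof (cases "u $ k = 0")
    case True
    then show ?thesis using that[of 0 1] by simp
  next
    case False
    have "u $ k = complex_of_real (- cmod (u $ k)) * (- u $ k / complex_of_real (cmod (u $ k)))"
      using False by simp
    moreover have "(- u $ k / complex_of_real (cmod (u $ k))) * cnj (- u $ k / complex_of_real (cmod (u $ k))) = 1"
      using False by (simp add: complex_norm_square[symmetric] power2_eq_square)
    moreover have "- cmod (u $ k) \<noteq> 1" by (smt (verit) norm_ge_zero)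
    ultimately show ?thesis using that by blast
  qed
  define w where "w = (\<chi> i. u $ i - (if i = k then \<alpha> else 0))"
  have h: "hh w ** matrix_unit k k ** hh w = outer u" and q: "qc w \<noteq> 0"
    using householder_outer[OF u1 uk a1 r1] unfolding w_def by auto
  have "N (hh w ** matrix_unit k k ** hh w) = N (matrix_unit k k)"
    by (rule N_unitary[OF UI]) (simp_all add: hh_unitary q)
  then show ?thesis using h Nk by simp
qed

lemma N_outer: "N (outer v) = (\<Sum>i\<in>UNIV. (cmod (v $ i))^2)"
proof (cases "v = 0")
  case True
  then have "outer v = 0" by (simp add: outer_def vec_eq_iff)
  then show ?thesis using True N_zero[OF UI] by simp
next
  case False
  define s where "s = (\<Sum>i\<in>UNIV. (cmod (v $ i))^2)"
  have sp: "s > 0" using False qc_zero[of v] qc_nonneg[of v] unfolding s_def by linarith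
  define c where "c = sqrt s"
  have cp: "c > 0" using sp by (simp add: c_def)
  have cc: "c * c = s" using sp by (simp add: c_def)
  define u where "u = (\<chi> i. v $ i / complex_of_real c)"
  have "qc u = qc v / (complex_of_real c * complex_of_real c)"
    unfolding qc_def u_def by (simp add: sum_divide_distrib algebra_simps)
  also have "\<dots> = complex_of_real s / complex_of_real (c * c)"
    unfolding qc_real s_def of_real_mult by (rule refl)
  also have "\<dots> = 1" using cc sp by simp
  finally have u1: "qc u = 1" .
  have "outer v = cs (complex_of_real s) (outer u)"
    using cp cc sp by (simp add: outer_def cs_def u_def vec_eq_iff field_simps flip: of_real_mult)
  then have "N (outer v) = s * N (outer u)" using sp by (simp add: N_cs[OF UI])
  then show ?thesis using N_outer_unit[OF u1] by (simp add: s_def)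
qed

lemma N_unit_all: "N (matrix_unit a a) = 1"
proof -
  have "matrix_unit a a = outer (\<chi> i. if i = a then (1::complex) else 0)"
    by (simp add: matrix_unit_def outer_def vec_eq_iff)
  moreover have "(\<Sum>i\<in>UNIV. (cmod ((\<chi> i. if i = a then (1::complex) else 0) $ i))^2) = 1"
    by (simp add: if_distrib[where f=cmod] if_distrib[where f="\<lambda>x. x^2"] cong: if_cong)
  ultimately show ?thesis by (simp add: N_outer)
qed

end

definition Qf :: "complex^'n^'n \<Rightarrow> ('n \<Rightarrow> complex) \<Rightarrow> complex" where
  "Qf B x = (\<Sum>i\<in>UNIV. \<Sum>l\<in>UNIV. cnj (x i) * B $ i $ l * x l)"

lemma psd_Qf: assumes "psd B" shows "0 \<le> Re (Qf B x)"
proof -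
  have "0 \<le> Re (\<Sum>i\<in>UNIV. \<Sum>j\<in>UNIV. cnj ((\<chi> i. x i) $ i) * B $ i $ j * (\<chi> i. x i) $ j)"
    using assms unfolding psd_def by blast
  then show ?thesis by (simp add: Qf_def)
qed

lemma psd_herm: "psd B \<Longrightarrow> B $ j $ i = cnj (B $ i $ j)"
  unfolding psd_def adjoint_def by (metis complex_cnj_cnj vec_lambda_beta)

lemma Qf_shift:
  fixes B :: "complex^'n^'n"
  shows "Qf B (\<lambda>i. x i + (if i = a then t else 0)) = Qf B x + cnj t * (\<Sum>l\<in>UNIV. B $ a $ l * x l)
     + (\<Sum>i\<in>UNIV. cnj (x i) * B $ i $ a) * t + cnj t * B $ a $ a * t"
proof -
  have e: "cnj (x i + (if i = a then t else 0)) * B $ i $ l * (x l + (if l = a then t else 0))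
     = cnj (x i) * B $ i $ l * x l + (if i = a then cnj t * B $ a $ l * x l else 0)
       + (if l = a then cnj (x i) * B $ i $ a * t else 0)
       + (if i = a then (if l = a then cnj t * B $ a $ a * t else 0) else 0)" for i l
    by (auto simp add: algebra_simps)
  have h1: "(\<Sum>i\<in>UNIV. \<Sum>l\<in>UNIV. if i = a then f l else 0) = (\<Sum>l\<in>UNIV. f l)" for f :: "'n \<Rightarrow> complex"
  proof -
    have "(\<Sum>l\<in>UNIV. if i = a then f l else 0) = (if i = a then (\<Sum>l\<in>UNIV. f l) else 0)" for i
      by (cases "i = a") simp_all
    then show ?thesis by (simp add: sum.delta')
  qed
  have h2: "(\<Sum>i\<in>UNIV. \<Sum>l\<in>UNIV. if l = a then g i else 0) = (\<Sum>i\<in>UNIV. g i)" for g :: "'n \<Rightarrow> complex"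
    by (simp add: sum.delta')
  have h3: "(\<Sum>i\<in>UNIV. \<Sum>l\<in>UNIV. if i = a then (if l = a then c else 0) else 0) = (c::complex)"
    using h1[of "\<lambda>l. if l = a then c else 0"] by (simp add: sum.delta')
  show ?thesis
    unfolding Qf_def e sum.distrib h1 h2 h3
    by (simp add: sum_distrib_right sum_distrib_left algebra_simps)
qed

lemma Qf_delta:
  fixes B :: "complex^'n^'n"
  shows "Qf B (\<lambda>i. if i = j then p else 0) = cnj p * B $ j $ j * p"
  unfolding Qf_def
  by (simp add: if_distrib[where f=cnj] if_distrib[where f="\<lambda>x. x * _"] if_distrib[where f="\<lambda>x. _ * x"] sum.delta sum.delta' cong: if_cong)

lemma psd_diag: assumes "psd B" shows "B $ a $ a = complex_of_real (Re (B $ a $ a))" "0 \<le> Re (B $ a $ a)"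
proof -
  show "B $ a $ a = complex_of_real (Re (B $ a $ a))"
    using psd_herm[OF assms, of a a] by (simp add: complex_eq_iff)
  show "0 \<le> Re (B $ a $ a)" using psd_Qf[OF assms, of "\<lambda>i. if i = a then 1 else 0"] by (simp add: Qf_delta)
qed

lemma psd_zero_row:
  assumes P: "psd B" and z: "B $ a $ a = 0"
  shows "B $ a $ j = 0"
proof (rule ccontr)
  assume nz: "B $ a $ j \<noteq> 0"
  then have ja: "j \<noteq> a" using z by auto
  define \<beta> where "\<beta> = B $ a $ j"
  define s where "s = (Re (B $ j $ j) + 1) / (2 * (cmod \<beta>)^2)"
  define t where "t = - complex_of_real s * \<beta>"
  have bp: "(cmod \<beta>)^2 > 0" using nz by (simp add: \<beta>_def)
  have hj: "B $ j $ a = cnj \<beta>" using psd_herm[OF P, of a j] by (simp add: \<beta>_def)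
  have "Qf B (\<lambda>i. (if i = j then 1 else 0) + (if i = a then t else 0))
      = B $ j $ j + cnj t * \<beta> + cnj \<beta> * t"
  proof -
    have s1: "(\<Sum>l\<in>UNIV. B $ a $ l * (if l = j then 1 else 0)) = \<beta>"
      by (simp add: \<beta>_def if_distrib[where f="\<lambda>x. _ * x"] sum.delta cong: if_cong)
    have s2: "(\<Sum>i\<in>UNIV. cnj (if i = j then 1 else 0) * B $ i $ a) = cnj \<beta>"
      by (simp add: hj[symmetric] if_distrib[where f=cnj] if_distrib[where f="\<lambda>x. x * _"] sum.delta cong: if_cong)
    show ?thesis unfolding Qf_shift Qf_delta s1 s2 using z by simp
  qed
  also have "\<dots> = B $ j $ j - complex_of_real (2 * s * (cmod \<beta>)^2)"
  proof -
    have "cnj t * \<beta> + cnj \<beta> * t = - complex_of_real (2 * s) * (cnj \<beta> * \<beta>)" by (simp add: t_def algebra_simps)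
    then show ?thesis unfolding cnj_mult_self by simp
  qed
  finally have "Re (Qf B (\<lambda>i. (if i = j then 1 else 0) + (if i = a then t else 0))) = Re (B $ j $ j) - 2 * s * (cmod \<beta>)^2"
    by simp
  also have "\<dots> = -1" using bp by (simp add: s_def field_simps)
  finally show False using psd_Qf[OF P] by (metis neg_0_le_iff_le not_one_le_zero)
qed

definition colv :: "complex^'n^'n \<Rightarrow> 'n \<Rightarrow> complex^'n" where
  "colv B a = (\<chi> i. B $ i $ a)"

lemma schur_psd:
  assumes P: "psd B" and b: "B $ a $ a \<noteq> 0"
  shows "psd (B - cs (1 / B $ a $ a) (outer (colv B a)))"
proof -
  define b where "b = B $ a $ a"
  have br: "cnj b = b" using psd_herm[OF P, of a a] by (simp add: b_def)
  define B' where "B' = B - cs (1 / b) (outer (colv B a))"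
  have herm: "adjoint B' = B'"
  proof -
    have "cnj (B $ i $ j) = B $ j $ i" for i j using psd_herm[OF P, of j i] by simp
    then show ?thesis using br
      by (simp add: B'_def adjoint_def vec_eq_iff cs_def outer_def colv_def mult.commute)
  qed
  have "0 \<le> Re (Qf B' x)" for x
  proof -
    define \<beta> where "\<beta> = (\<Sum>l\<in>UNIV. B $ a $ l * x l)"
    have cb: "(\<Sum>i\<in>UNIV. cnj (x i) * B $ i $ a) = cnj \<beta>"
    proof -
      have t: "cnj (x i) * B $ i $ a = cnj (B $ a $ i * x i)" for i using psd_herm[OF P, of a i] by simp
      show ?thesis unfolding \<beta>_def cnj_sum by (rule sum.cong[OF refl], rule t)
    qed
    have "Qf B' x = Qf B x - (\<Sum>i\<in>UNIV. \<Sum>l\<in>UNIV. (1 / b) * ((cnj (x i) * B $ i $ a) * (B $ a $ l * x l)))"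
    proof -
      have "cnj (x i) * B' $ i $ l * x l = cnj (x i) * B $ i $ l * x l - (1 / b) * ((cnj (x i) * B $ i $ a) * (B $ a $ l * x l))" for i l
        using psd_herm[OF P, of a l] by (simp add: B'_def cs_def outer_def colv_def algebra_simps)
      then show ?thesis unfolding Qf_def by (simp add: sum_subtractf)
    qed
    also have "\<dots> = Qf B x - (1 / b) * ((\<Sum>i\<in>UNIV. cnj (x i) * B $ i $ a) * \<beta>)"
      unfolding \<beta>_def sum_product by (simp only: sum_distrib_left)
    also have "\<dots> = Qf B x - (1 / b) * (cnj \<beta> * \<beta>)" unfolding cb by (rule refl)
    also have "\<dots> = Qf B (\<lambda>i. x i + (if i = a then - \<beta> / b else 0))"
      unfolding Qf_shift cb \<beta>_def[symmetric] using b br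
      by (simp add: b_def[symmetric] field_simps)
    finally show ?thesis using psd_Qf[OF P] by simp
  qed
  then have "\<forall>x. 0 \<le> Re (\<Sum>i\<in>UNIV. \<Sum>j\<in>UNIV. cnj (x $ i) * B' $ i $ j * x $ j)"
    unfolding Qf_def by blast
  then show ?thesis using herm unfolding psd_def B'_def b_def by blast
qed

lemma trace_outer: "trace (outer c) = complex_of_real (\<Sum>i\<in>UNIV. (cmod (c $ i))^2)"
  unfolding trace_def outer_def of_real_sum
  by (rule sum.cong[OF refl]) (simp only: complex_norm_square vec_lambda_beta)

lemma trace_cs: "trace (cs r X) = r * trace X"
  by (simp add: trace_def cs_def sum_distrib_left)

context
  fixes N :: "complex^'n^'n \<Rightarrow> real" and k :: 'n
  assumes UI: "unitarily_invariant_norm N" and Nk: "N (matrix_unit k k) = 1"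
begin

lemma N_psd_trace_aux:
  "finite A \<Longrightarrow> \<forall>B. psd B \<and> (\<forall>i j. i \<notin> A \<or> j \<notin> A \<longrightarrow> B $ i $ j = 0) \<longrightarrow> N B \<le> Re (trace B)"
proof (induction A rule: finite_induct)
  case empty
  show ?case
  proof (intro allI impI)
    fix B :: "complex^'n^'n" assume "psd B \<and> (\<forall>i j. i \<notin> {} \<or> j \<notin> {} \<longrightarrow> B $ i $ j = 0)"
    then have "B = 0" by (simp add: vec_eq_iff)
    then show "N B \<le> Re (trace B)" by (simp add: N_zero[OF UI] trace_def)
  qed
next
  case (insert a A)
  show ?case
  proof (intro allI impI)
    fix B :: "complex^'n^'n" assume H: "psd B \<and> (\<forall>i j. i \<notin> insert a A \<or> j \<notin> insert a A \<longrightarrow> B $ i $ j = 0)"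
    then have P: "psd B" and S: "\<And>i j. i \<notin> insert a A \<or> j \<notin> insert a A \<Longrightarrow> B $ i $ j = 0" by auto
    show "N B \<le> Re (trace B)"
    proof (cases "B $ a $ a = 0")
      case True
      have ra: "B $ a $ j = 0" for j by (rule psd_zero_row[OF P True])
      have ca: "B $ j $ a = 0" for j using psd_herm[OF P, of a j] ra[of j] by simp
      have "\<forall>i j. i \<notin> A \<or> j \<notin> A \<longrightarrow> B $ i $ j = 0"
        using S ra ca by (metis insert_iff)
      then show ?thesis using insert.IH P by blast
    next
      case False
      define b where "b = B $ a $ a"
      define c where "c = colv B a"
      define B' where "B' = B - cs (1 / b) (outer c)"
      have bnz: "b \<noteq> 0" using False by (simp add: b_def)
      have br: "b = complex_of_real (Re b)" "0 \<le> Re b" unfolding b_def by (rule psd_diag(1)[OF P], rule psd_diag(2)[OF P])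
      have bp: "0 < Re b" using br bnz by (metis le_less of_real_0)
      have bm: "cmod b = Re b" using br by (metis norm_of_real abs_of_nonneg)
      have P': "psd B'" unfolding B'_def b_def c_def by (rule schur_psd[OF P False])
      have S': "\<forall>i j. i \<notin> A \<or> j \<notin> A \<longrightarrow> B' $ i $ j = 0"
      proof (intro allI impI)
        fix i j assume ij: "i \<notin> A \<or> j \<notin> A"
        have h: "B $ a $ j = cnj (B $ j $ a)" using psd_herm[OF P, of j a] by simp
        have "B' $ i $ j = B $ i $ j - B $ i $ a * B $ a $ j / b"
          by (simp add: B'_def cs_def outer_def c_def colv_def h)
        also have "\<dots> = 0"
        proof (cases "i = a \<or> j = a")
          case True
          then show ?thesis using bnz by (auto simp add: b_def)
        next
          case False
          then have "i \<notin> insert a A \<or> j \<notin> insert a A" using ij by auto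
          then show ?thesis using S[of i j] S[of i a] S[of a j] by auto
        qed
        finally show "B' $ i $ j = 0" .
      qed
      have IH: "N B' \<le> Re (trace B')" using insert.IH P' S' by blast
      have "B = B' + cs (1 / b) (outer c)" by (simp add: B'_def)
      then have t1: "N B \<le> N B' + N (cs (1 / b) (outer c))" using N_tri[OF UI] by metis
      have t2: "N (cs (1 / b) (outer c)) = (\<Sum>i\<in>UNIV. (cmod (c $ i))^2) / Re b"
        using bp bm by (simp add: N_cs[OF UI] N_outer[OF UI Nk] norm_divide)
      have t3: "Re (trace B') = Re (trace B) - (\<Sum>i\<in>UNIV. (cmod (c $ i))^2) / Re b"
      proof -
        have "trace B' = trace B - (1 / b) * complex_of_real (\<Sum>i\<in>UNIV. (cmod (c $ i))^2)"
          by (simp add: B'_def trace_sub trace_cs trace_outer)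
        also have "\<dots> = trace B - complex_of_real ((\<Sum>i\<in>UNIV. (cmod (c $ i))^2) / Re b)"
          by (subst br(1)) simp
        finally show ?thesis by simp
      qed
      show ?thesis using IH t1 t2 t3 by linarith
    qed
  qed
qed

lemma N_psd_trace: "psd B \<Longrightarrow> N B \<le> Re (trace B)"
  using N_psd_trace_aux[of UNIV] by simp

end

lemma psd_cs_outer:
  fixes v :: "complex^'n"
  assumes r: "0 \<le> r" shows "psd (cs (complex_of_real r) (outer v))"
proof -
  have herm: "adjoint (cs (complex_of_real r) (outer v)) = cs (complex_of_real r) (outer v)"
    by (simp add: adjoint_def cs_def outer_def vec_eq_iff mult.commute mult.left_commute)
  have "0 \<le> Re (\<Sum>i\<in>UNIV. \<Sum>j\<in>UNIV. cnj (x $ i) * cs (complex_of_real r) (outer v) $ i $ j * x $ j)" for x :: "complex^'n"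
  proof -
    define \<gamma> where "\<gamma> = (\<Sum>j\<in>UNIV. cnj (v $ j) * x $ j)"
    have cg: "(\<Sum>i\<in>UNIV. cnj (x $ i) * v $ i) = cnj \<gamma>"
      unfolding \<gamma>_def cnj_sum by (rule sum.cong[OF refl]) simp
    have "(\<Sum>i\<in>UNIV. \<Sum>j\<in>UNIV. cnj (x $ i) * cs (complex_of_real r) (outer v) $ i $ j * x $ j)
        = complex_of_real r * ((\<Sum>i\<in>UNIV. cnj (x $ i) * v $ i) * \<gamma>)"
      unfolding \<gamma>_def sum_product
      by (simp add: sum_distrib_left cs_def outer_def algebra_simps)
    also have "\<dots> = complex_of_real (r * (cmod \<gamma>)^2)" unfolding cg cnj_mult_self by simp
    finally show ?thesis using r by simp
  qed
  then show ?thesis using herm unfolding psd_def by blast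
qed

lemma matrix_unit_outer: "matrix_unit a a = cs (complex_of_real 1) (outer (\<chi> i. if i = a then (1::complex) else 0))"
  by (simp add: matrix_unit_def outer_def cs_def vec_eq_iff)

lemma psd_unit: "psd (matrix_unit a a)"
  unfolding matrix_unit_outer by (rule psd_cs_outer) simp

lemma trace_diag_adj: "trace (diagm f ** adjoint Y) = (\<Sum>i\<in>UNIV. f i * cnj (Y $ i $ i))"
  by (simp add: trace_def diagm_mult_left adjoint_def)

lemma had_diag:
  assumes "\<And>i j. i \<noteq> j \<Longrightarrow> D $ i $ j = 0"
  shows "D \<circ>\<^sub>H B = diagm (\<lambda>i. D $ i $ i * B $ i $ i)"
  using assms by (auto simp add: hadamard_def diagm_def vec_eq_iff)

lemma matrix_inv_diag:
  assumes "\<And>i. f i * g i = 1"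
  shows "matrix_inv (diagm f) = diagm g"
proof -
  have fg: "diagm f ** diagm g = mat 1" "diagm g ** diagm f = mat 1"
    using assms by (simp_all add: diagm_mult mat1_diagm mult.commute)
  define M where "M = matrix_inv (diagm f)"
  have "diagm f ** M = mat 1 \<and> M ** diagm f = mat 1"
    unfolding M_def matrix_inv_def by (rule someI[of _ "diagm g"]) (use fg in simp)
  then have "M = M ** (diagm f ** diagm g)" "M ** diagm f = mat 1" using fg by simp_all
  then have "M = diagm g" by (simp add: matrix_mul_assoc)
  then show ?thesis by (simp add: M_def)
qed

theorem proposition5p3:
  fixes N :: "complex^'n^'n \<Rightarrow> real" and D :: "complex^'n^'n" and k :: 'n
  assumes "unitarily_invariant_norm N"
    and "N (matrix_unit k k) = 1"
    and "pos_def_diagonal D"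
  shows "I_index N D = inverse (dual_norm N (matrix_inv D))"
proof -
  note UI = assms(1) and Nk = assms(2)
  define d where "d i = Re (D $ i $ i)" for i
  have offd: "\<And>i j. i \<noteq> j \<Longrightarrow> D $ i $ j = 0" using assms(3) by (simp add: pos_def_diagonal_def)
  have dpos: "0 < d i" for i using assms(3) by (simp add: pos_def_diagonal_def d_def)
  have dnz[simp]: "d i \<noteq> 0" for i using dpos[of i] by simp
  have dabs[simp]: "\<bar>d i\<bar> = d i" for i using dpos[of i] by simp
  have dpos'[simp]: "0 < d i" for i by (rule dpos)
  have Dii: "D $ i $ i = complex_of_real (d i)" for i
    using assms(3) unfolding pos_def_diagonal_def d_def by (metis Reals_cases Re_complex_of_real)
  have Dd: "D = diagm (\<lambda>i. complex_of_real (d i))"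
    using offd Dii by (auto simp add: diagm_def vec_eq_iff)
  define f where "f i = complex_of_real (1 / d i)" for i
  have Dinv: "matrix_inv D = diagm f"
    unfolding Dd f_def by (rule matrix_inv_diag) (use dnz in \<open>simp flip: of_real_mult\<close>)
  have had: "D \<circ>\<^sub>H B = diagm (\<lambda>i. complex_of_real (d i) * B $ i $ i)" for B
    using had_diag[OF offd, of B] by (simp add: Dii)
  define S where "S = {cmod (trace (diagm f ** adjoint Y)) | Y. N Y \<le> 1}"
  define T where "T = {N (D \<circ>\<^sub>H B) | B. psd B \<and> N B = 1}"
  have dual: "dual_norm N (matrix_inv D) = Sup S" by (simp add: dual_norm_def Dinv S_def)
  have Ieq: "I_index N D = Inf T" by (simp add: I_index_def T_def)
  define t where "t Y = (\<Sum>i\<in>UNIV. cmod (Y $ i $ i) / d i)" for Y :: "complex^'n^'n"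
  have entry: "cmod (Y $ i $ i) \<le> N Y" for Y i
  proof -
    have "cmod (complex_of_real (cmod (Y $ i $ i))) * N (matrix_unit i i)
          \<le> N (diagm (\<lambda>i. complex_of_real (cmod (Y $ i $ i))))"
      by (rule N_diag_entry[OF UI])
    also have "\<dots> \<le> N Y" by (rule N_diag_abs[OF UI])
    finally show ?thesis by (simp add: N_unit_all[OF UI Nk])
  qed
  have trle: "cmod (trace (diagm f ** adjoint Y)) \<le> t Y" for Y
  proof -
    have "cmod (trace (diagm f ** adjoint Y)) \<le> (\<Sum>i\<in>UNIV. cmod (f i * cnj (Y $ i $ i)))"
      unfolding trace_diag_adj by (rule norm_sum)
    also have "\<dots> = t Y" unfolding t_def f_def
      by (rule sum.cong[OF refl]) (use dpos in \<open>simp add: norm_mult norm_divide\<close>)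
    finally show ?thesis .
  qed
  have bdd: "bdd_above S"
  proof (rule bdd_aboveI)
    fix x assume "x \<in> S"
    then obtain Y where x: "x = cmod (trace (diagm f ** adjoint Y))" and Y: "N Y \<le> 1" by (auto simp add: S_def)
    have "t Y \<le> (\<Sum>i\<in>UNIV. 1 / d i)" unfolding t_def
    proof (rule sum_mono)
      fix i :: 'n
      have "cmod (Y $ i $ i) \<le> 1" using entry[of Y i] Y by linarith
      then show "cmod (Y $ i $ i) / d i \<le> 1 / d i" by (rule divide_right_mono) (simp add: less_imp_le)
    qed
    then show "x \<le> (\<Sum>i\<in>UNIV. 1 / d i)" using x trle[of Y] by linarith
  qed
  have Sne: "S \<noteq> {}" using N_unit_all[OF UI Nk, of k] by (auto simp add: S_def intro!: exI[of _ "matrix_unit k k"])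
  have Tne: "T \<noteq> {}" using N_unit_all[OF UI Nk, of k] psd_unit[of k] by (auto simp add: T_def)
  define s where "s = Sup S"
  have spos: "0 < s"
  proof -
    have "cmod (trace (diagm f ** adjoint (matrix_unit k k))) \<in> S"
      using N_unit_all[OF UI Nk, of k] by (auto simp add: S_def)
    then have "cmod (trace (diagm f ** adjoint (matrix_unit k k))) \<le> s"
      unfolding s_def by (rule cSup_upper[OF _ bdd])
    moreover have "cmod (trace (diagm f ** adjoint (matrix_unit k k))) = 1 / d k"
      unfolding trace_diag_adj using dpos[of k]
      by (simp add: matrix_unit_def f_def norm_divide if_distrib[where f=cnj] if_distrib[where f="\<lambda>x. _ * x"] sum.delta cong: if_cong)
    ultimately show ?thesis using dpos[of k] by (smt (verit) divide_pos_pos)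
  qed
  have lower: "1 / s \<le> x" if "x \<in> T" for x
  proof -
    obtain B where x: "x = N (D \<circ>\<^sub>H B)" and P: "psd B" and NB: "N B = 1" using \<open>x \<in> T\<close> by (auto simp add: T_def)
    define \<beta> where "\<beta> i = Re (B $ i $ i)" for i
    have Bii: "B $ i $ i = complex_of_real (\<beta> i)" for i unfolding \<beta>_def by (rule psd_diag(1)[OF P])
    have bnn: "0 \<le> \<beta> i" for i unfolding \<beta>_def by (rule psd_diag(2)[OF P])
    have trB: "1 \<le> (\<Sum>i\<in>UNIV. \<beta> i)"
      using N_psd_trace[OF UI Nk P] NB by (simp add: trace_def \<beta>_def)
    define C where "C = D \<circ>\<^sub>H B"
    have C: "C = diagm (\<lambda>i. complex_of_real (d i * \<beta> i))" by (simp add: C_def had Bii)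
    define nC where "nC = N C"
    have nCpos: "0 < nC"
    proof (rule ccontr)
      assume "\<not> 0 < nC"
      then have "nC = 0" using N_nonneg[OF UI, of C] by (simp add: nC_def)
      then have "C = 0" using N_zero_iff[OF UI] by (simp add: nC_def)
      then have "d i * \<beta> i = 0" for i using C by (metis (mono_tags, lifting) diagm_def of_real_eq_0_iff vec_lambda_beta zero_index)
      then have "\<beta> i = 0" for i using dpos[of i] by simp
      then show False using trB by simp
    qed
    define Y where "Y = cs (complex_of_real (1 / nC)) C"
    have NY: "N Y = 1" using nCpos by (simp add: Y_def N_cs[OF UI] nC_def[symmetric] norm_divide)
    have tr: "trace (diagm f ** adjoint Y) = complex_of_real ((\<Sum>i\<in>UNIV. \<beta> i) / nC)"
      unfolding trace_diag_adj of_real_sum sum_divide_distrib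
      by (rule sum.cong[OF refl]) (use dpos in \<open>simp add: Y_def C cs_def diagm_def f_def\<close>)
    have "cmod (trace (diagm f ** adjoint Y)) = \<bar>(\<Sum>i\<in>UNIV. \<beta> i) / nC\<bar>"
      unfolding tr norm_of_real by (rule refl)
    then have "cmod (trace (diagm f ** adjoint Y)) = (\<Sum>i\<in>UNIV. \<beta> i) / nC"
      using nCpos trB by simp
    moreover have "cmod (trace (diagm f ** adjoint Y)) \<in> S" using NY by (auto simp add: S_def)
    ultimately have "(\<Sum>i\<in>UNIV. \<beta> i) / nC \<le> s" using cSup_upper[OF _ bdd] by (simp add: s_def)
    then have "1 / nC \<le> s" using trB nCpos by (smt (verit) divide_right_mono)
    then have "1 / s \<le> nC" using nCpos spos by (simp add: field_simps)
    then show ?thesis by (simp add: x nC_def C_def)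
  qed
  have Ilow: "1 / s \<le> Inf T" by (rule cInf_greatest[OF Tne lower])
  have Ipos: "0 < Inf T" using Ilow spos by (smt (verit) divide_pos_pos)
  have bddT: "bdd_below T" using N_nonneg[OF UI] by (auto simp add: T_def intro: bdd_belowI[of _ 0])
  have upper: "y \<le> 1 / Inf T" if "y \<in> S" for y
  proof -
    obtain Y where y: "y = cmod (trace (diagm f ** adjoint Y))" and Y: "N Y \<le> 1" using \<open>y \<in> S\<close> by (auto simp add: S_def)
    have "t Y \<le> 1 / Inf T"
    proof (cases "t Y = 0")
      case True then show ?thesis using Ipos by simp
    next
      case False
      have tnn: "0 \<le> t Y" unfolding t_def by (rule sum_nonneg, rule divide_nonneg_pos) simp_all
      then have tp: "0 < t Y" using False by simp
      define v where "v = (\<chi> i. complex_of_real (sqrt (cmod (Y $ i $ i) / d i)))"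
      have cv: "(cmod (v $ i))^2 = cmod (Y $ i $ i) / d i" for i
      proof -
        have "0 \<le> cmod (Y $ i $ i) / d i" by (rule divide_nonneg_pos) simp_all
        then show ?thesis by (simp add: v_def)
      qed
      have NB0: "N (outer v) = t Y" by (simp add: N_outer[OF UI Nk] cv t_def)
      define B where "B = cs (complex_of_real (1 / t Y)) (outer v)"
      have PB: "psd B" unfolding B_def by (rule psd_cs_outer) (use tp in simp)
      have NB: "N B = 1" using tp by (simp add: B_def N_cs[OF UI] NB0 norm_divide)
      have "D \<circ>\<^sub>H B = cs (complex_of_real (1 / t Y)) (diagm (\<lambda>i. complex_of_real (cmod (Y $ i $ i))))"
      proof -
        have "complex_of_real (d i) * B $ i $ i = complex_of_real (1 / t Y) * complex_of_real (cmod (Y $ i $ i))" for i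
        proof -
          have "B $ i $ i = complex_of_real (1 / t Y) * complex_of_real (cmod (Y $ i $ i) / d i)"
            unfolding B_def cs_def outer_def vec_lambda_beta cv[symmetric]
            by (simp add: complex_norm_square flip: of_real_power)
          then show ?thesis using dpos[of i] by simp
        qed
        then show ?thesis unfolding had by (simp add: vec_eq_iff cs_def diagm_def)
      qed
      then have "N (D \<circ>\<^sub>H B) = (1 / t Y) * N (diagm (\<lambda>i. complex_of_real (cmod (Y $ i $ i))))"
        using tp by (simp add: N_cs[OF UI] norm_divide)
      also have "\<dots> \<le> (1 / t Y) * N Y"
        using tp N_diag_abs[OF UI, of Y] by (simp add: divide_right_mono)
      also have "\<dots> \<le> 1 / t Y" using tp Y by (simp add: divide_right_mono)
      finally have "N (D \<circ>\<^sub>H B) \<le> 1 / t Y" .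
      moreover have "Inf T \<le> N (D \<circ>\<^sub>H B)"
        by (rule cInf_lower[OF _ bddT]) (use PB NB in \<open>auto simp add: T_def\<close>)
      ultimately have "Inf T \<le> 1 / t Y" by linarith
      then show ?thesis using tp Ipos by (simp add: field_simps)
    qed
    then show ?thesis using y trle[of Y] by linarith
  qed
  have "s \<le> 1 / Inf T" unfolding s_def by (rule cSup_least[OF Sne upper])
  then have "Inf T \<le> 1 / s" using Ipos spos by (simp add: field_simps)
  then have "Inf T = 1 / s" using Ilow by linarith
  then show ?thesis by (simp add: Ieq dual s_def inverse_eq_divide)
qed

end
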